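(* Consider the structured private pooled-sequencing scheme with constant coverage depth described in the context, with $M$ unknown and $M$ known individuals. Let $\beta\in(0,1)$. If $M\geq 1/\beta$, then the privacy condition $$\frac{I\left(X_{m,n},\ m\in\{0,\dots,M-1\},\ n\in[N];\ \mathcal{R}\right)}{MN}\leq\beta$$ holds, where $\mathcal{R}$ is the set of reads available to the sequencer.
   Context: Setting. Each genome is described by $N$ SNP positions with binary values. There are $M$ "unknown" individuals $m\in\{0,\dots,M-1\}$ with SNP matrix $\mathbf{X}\in\{0,1\}^{M\times N}$ whose entries $X_{m,n}$ are mutually independent (with arbitrary allele-frequency priors), and $M$ "known" individuals $k\in\{0,\dots,M-1\}$ with SNP matrix $\mathbf{Y}\in\{0,1\}^{M\times N}$ whose entries are i.i.d. uniform on $\{0,1\}$ and independent of $\mathbf{X}$; $\mathbf{Y}$ is known to a trusted data collector but unknown to the sequencer. Genomes are sheared into fragments, each containing at most one SNP and mappable unambiguously to its SNP position. All fragments are pooled without individual labels and sent to the sequencer, which reads them, each SNP read being flipped independently with probability $\eta\in(0,1/2)$; $\mathcal{R}$ is the resulting set of reads. In the structured scheme with constant coverage depth, at every SNP position $n$ unknown individual $m$ contributes exactly $2^m\alpha_0$ fragments and known individual $k$ contributes exactly $2^k\alpha_0$ fragments, $\alpha_0\in\mathbb{N}$. Hence for each position $n$ the sequencer's information is the count of read 1's among fragments covering $n$ (modeled, after normalization, as $q_n=\sum_{m=0}^{M-1}2^m(X_{m,n}+Y_{m,n})+\tilde Z_n$ with Gaussian noise $\tilde Z_n$ independent of $\mathbf{X},\mathbf{Y}$).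 *)

theory Defs
  imports "HOL-Probability.Probability" "HOL-Library.Multiset"
begin

text \<open>Fragments are indexed by (is_known, individual, copy, position).
  At position n, individual i (unknown: is_known = False, known: is_known = True)
  contributes exactly 2^i * alpha0 fragments.\<close>

type_synonym frag = "bool \<times> nat \<times> nat \<times> nat"

definition frags :: "nat \<Rightarrow> nat \<Rightarrow> nat \<Rightarrow> frag set" where
  "frags M N alpha0 = {(k, i, j, n). i < M \<and> j < 2 ^ i * alpha0 \<and> n < N}"

definition frag_value :: "(nat \<times> nat \<Rightarrow> bool) \<Rightarrow> (nat \<times> nat \<Rightarrow> bool) \<Rightarrow> frag \<Rightarrow> bool" where
  "frag_value X Y f = (case f of (k, i, j, n) \<Rightarrow> if k then Y (i, n) else X (i, n))"

text \<open>The pooled, unlabelled set of reads: a multiset of (SNP position, read value);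
  the read value is the true value flipped iff the flip indicator F is True.\<close>
definition reads :: "nat \<Rightarrow> nat \<Rightarrow> nat \<Rightarrow> (nat \<times> nat \<Rightarrow> bool) \<Rightarrow> (nat \<times> nat \<Rightarrow> bool)
    \<Rightarrow> (frag \<Rightarrow> bool) \<Rightarrow> (nat \<times> bool) multiset" where
  "reads M N alpha0 X Y F =
     image_mset (\<lambda>f. (snd (snd (snd f)), frag_value X Y f \<noteq> F f)) (mset_set (frags M N alpha0))"

definition pooled_joint :: "nat \<Rightarrow> nat \<Rightarrow> nat \<Rightarrow> real \<Rightarrow> (nat \<times> nat \<Rightarrow> real)
    \<Rightarrow> ((nat \<times> nat \<Rightarrow> bool) \<times> (nat \<times> bool) multiset) pmf" where
  "pooled_joint M N alpha0 eta p =
     do { X \<leftarrow> Pi_pmf ({..<M} \<times> {..<N}) False (\<lambda>mn. bernoulli_pmf (p mn));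
          Y \<leftarrow> Pi_pmf ({..<M} \<times> {..<N}) False (\<lambda>_. bernoulli_pmf (1/2));
          F \<leftarrow> Pi_pmf (frags M N alpha0) False (\<lambda>_. bernoulli_pmf eta);
          return_pmf (X, reads M N alpha0 X Y F) }"

definition info_X_R :: "nat \<Rightarrow> nat \<Rightarrow> nat \<Rightarrow> real \<Rightarrow> (nat \<times> nat \<Rightarrow> real) \<Rightarrow> real" where
  "info_X_R M N alpha0 eta p =
     prob_space.mutual_information (measure_pmf (pooled_joint M N alpha0 eta p)) 2
       (count_space UNIV) (count_space UNIV) fst snd"

end

theory Submission
  imports Defs
begin

lemma MI_pmf_finite:
  fixes J :: "('a \<times> 'b) pmf" and b :: real
  assumes fin: "finite (set_pmf J)" and b: "1 < b"
  shows "prob_space.mutual_information (measure_pmf J) b (count_space UNIV) (count_space UNIV) fst snd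
     = (\<Sum>z\<in>set_pmf J. pmf J z * log b (pmf J z / (pmf (map_pmf fst J) (fst z) * pmf (map_pmf snd J) (snd z))))"
proof -
  define S where "S = set_pmf J"
  define A where "A = map_pmf fst J"
  define B where "B = map_pmf snd J"
  define c where "c = (\<lambda>z. pmf J z / (pmf A (fst z) * pmf B (snd z)))"
  define f where "f = (\<lambda>z. \<Sum>w\<in>S. c w * indicator {w} z)"
  define P where "P = measure_pmf A \<Otimes>\<^sub>M measure_pmf B"
  interpret pp: pair_prob_space "measure_pmf A" "measure_pmf B" by unfold_locales
  interpret Ps: prob_space P unfolding P_def by (rule pp.prob_space_axioms)
  have sets_P: "sets P = sets (count_space UNIV \<Otimes>\<^sub>M count_space UNIV)"
    unfolding P_def by (intro sets_pair_measure_cong) auto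
  have sing: "{w} \<in> sets P" for w
  proof -
    have "{fst w} \<times> {snd w} \<in> sets P" unfolding sets_P by (intro pair_measureI) auto
    then show ?thesis by simp
  qed
  have posA: "pmf A (fst w) > 0" if "w \<in> S" for w
    using that unfolding A_def S_def by (auto simp: pmf_positive_iff)
  have posB: "pmf B (snd w) > 0" if "w \<in> S" for w
    using that unfolding B_def S_def by (auto simp: pmf_positive_iff)
  have emP: "emeasure P {w} = pmf A (fst w) * pmf B (snd w)" for w
  proof -
    have "emeasure P ({fst w} \<times> {snd w}) = emeasure (measure_pmf A) {fst w} * emeasure (measure_pmf B) {snd w}"
      unfolding P_def by (rule measure_pmf.emeasure_pair_measure_Times) auto
    then show ?thesis by (simp add: emeasure_pmf_single ennreal_mult)
  qed
  have mP: "measure P {w} = pmf A (fst w) * pmf B (snd w)" for w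
    using emP[of w] by (simp add: Ps.emeasure_eq_measure)
  have fS: "f z = (if z \<in> S then c z else 0)" for z
    unfolding f_def by (auto simp: indicator_def fin S_def if_distrib sum.If_cases)
  have f_meas: "f \<in> borel_measurable P"
    unfolding f_def by (intro borel_measurable_sum borel_measurable_times borel_measurable_const borel_measurable_indicator sing)
  have f_nn: "0 \<le> f z" for z
    unfolding fS c_def by auto
  have Q_eq: "distr (measure_pmf J) (count_space UNIV \<Otimes>\<^sub>M count_space UNIV) (\<lambda>x. (fst x, snd x)) = density P f"
  proof (rule measure_eqI)
    show "sets (distr (measure_pmf J) (count_space UNIV \<Otimes>\<^sub>M count_space UNIV) (\<lambda>x. (fst x, snd x))) = sets (density P f)"
      using sets_P by simp
  next
    fix E assume E: "E \<in> sets (distr (measure_pmf J) (count_space UNIV \<Otimes>\<^sub>M count_space UNIV) (\<lambda>x. (fst x, snd x)))"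
    have "emeasure (distr (measure_pmf J) (count_space UNIV \<Otimes>\<^sub>M count_space UNIV) (\<lambda>x. (fst x, snd x))) E
        = emeasure (measure_pmf J) E"
      using E by (subst emeasure_distr) (auto simp: space_pair_measure)
    also have "\<dots> = emeasure (measure_pmf J) (E \<inter> S)"
      unfolding S_def by (simp add: emeasure_Int_set_pmf Int_commute)
    also have "\<dots> = (\<Sum>w\<in>E \<inter> S. ennreal (pmf J w))"
      using fin unfolding S_def by (simp add: emeasure_measure_pmf_finite)
    also have "\<dots> = (\<Sum>w\<in>S. ennreal (c w) * emeasure P ({w} \<inter> E))"
    proof -
      have "(\<Sum>w\<in>S. ennreal (c w) * emeasure P ({w} \<inter> E)) = (\<Sum>w\<in>S. if w \<in> E then ennreal (pmf J w) else 0)"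
      proof (rule sum.cong)
        fix w assume w: "w \<in> S"
        show "ennreal (c w) * emeasure P ({w} \<inter> E) = (if w \<in> E then ennreal (pmf J w) else 0)"
          using posA[OF w] posB[OF w] by (auto simp: emP c_def ennreal_mult'[symmetric])
      qed simp
      also have "\<dots> = (\<Sum>w\<in>E \<inter> S. ennreal (pmf J w))"
        using fin unfolding S_def by (simp add: sum.If_cases Int_commute)
      finally show ?thesis by simp
    qed
    also have "\<dots> = (\<integral>\<^sup>+ z. (\<Sum>w\<in>S. ennreal (c w) * indicator ({w} \<inter> E) z) \<partial>P)"
    proof -
      have EP: "{w} \<inter> E \<in> sets P" for w using E sets_P sing[of w] by auto
      show ?thesis
        using EP by (subst nn_integral_sum) (auto intro!: sum.cong simp: nn_integral_cmult_indicator)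
    qed
    also have "\<dots> = emeasure (density P f) E"
    proof -
      have pt: "(\<Sum>w\<in>S. ennreal (c w) * indicator ({w} \<inter> E) z) = ennreal (f z) * indicator E z" for z
      proof (cases "z \<in> S")
        case True
        have "(\<Sum>w\<in>S. ennreal (c w) * indicator ({w} \<inter> E) z) = (\<Sum>w\<in>S. if w = z then ennreal (c z) * indicator E z else 0)"
          by (intro sum.cong) (auto simp: indicator_def)
        also have "\<dots> = ennreal (c z) * indicator E z" using True fin unfolding S_def by simp
        finally show ?thesis using True by (simp add: fS)
      next
        case False
        have "(\<Sum>w\<in>S. ennreal (c w) * indicator ({w} \<inter> E) z) = 0"
          using False by (intro sum.neutral) (auto simp: indicator_def)
        then show ?thesis using False by (simp add: fS)
      qed
      show ?thesis
        using E sets_P f_meas by (subst emeasure_density) (auto simp: pt)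
    qed
    finally show "emeasure (distr (measure_pmf J) (count_space UNIV \<Otimes>\<^sub>M count_space UNIV) (\<lambda>x. (fst x, snd x))) E = emeasure (density P f) E" .
  qed
  have "prob_space.mutual_information (measure_pmf J) b (count_space UNIV) (count_space UNIV) fst snd
     = KL_divergence b P (density P f)"
  proof -
    have dA: "distr (measure_pmf J) (count_space UNIV) fst = measure_pmf A" unfolding A_def map_pmf_rep_eq ..
    have dB: "distr (measure_pmf J) (count_space UNIV) snd = measure_pmf B" unfolding B_def map_pmf_rep_eq ..
    show ?thesis
      unfolding prob_space.mutual_information_def[OF measure_pmf.prob_space_axioms] dA dB P_def[symmetric] Q_eq ..
  qed
  also have "\<dots> = (\<integral>z. f z * log b (f z) \<partial>P)"
    using b f_meas f_nn by (intro Ps.KL_density) auto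
  also have "\<dots> = (\<integral>z. (\<Sum>w\<in>S. (c w * log b (c w)) * indicator {w} z) \<partial>P)"
    by (intro Bochner_Integration.integral_cong) (auto simp: fS indicator_def fin S_def sum.If_cases)
  also have "\<dots> = (\<Sum>w\<in>S. (c w * log b (c w)) * measure P {w})"
  proof -
    have int: "integrable P (\<lambda>z. k * indicator {w} z)" for k :: real and w
      using sing[of w] by (intro integrable_mult_right integrable_real_indicator; simp add: Ps.emeasure_eq_measure)
    have sp: "space P = UNIV" unfolding P_def by (simp add: space_pair_measure)
    show ?thesis
      apply (subst Bochner_Integration.integral_sum[where I=S and f="\<lambda>w z. (c w * log b (c w)) * indicator {w} z"])
       apply (rule int)
      apply (simp add: sp)
      done
  qed
  also have "\<dots> = (\<Sum>w\<in>S. pmf J w * log b (c w))"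
  proof (rule sum.cong)
    fix w assume w: "w \<in> S"
    show "c w * log b (c w) * measure P {w} = pmf J w * log b (c w)"
      using posA[OF w] posB[OF w] by (simp add: mP c_def)
  qed simp
  finally show ?thesis unfolding S_def c_def A_def B_def .
qed

lemma MI_sum_bound:
  fixes J :: "('a \<times> 'b) pmf" and Q :: "'b \<Rightarrow> real" and C :: real
  assumes fin: "finite (set_pmf J)" and Qnn: "\<And>y. 0 \<le> Q y"
    and Qsum: "(\<Sum>y\<in>snd ` set_pmf J. Q y) \<le> 1" and C: "C > 0"
    and dom: "\<And>x y. pmf J (x, y) \<le> C * pmf (map_pmf fst J) x * Q y"
  shows "(\<Sum>z\<in>set_pmf J. pmf J z * log 2 (pmf J z / (pmf (map_pmf fst J) (fst z) * pmf (map_pmf snd J) (snd z)))) \<le> log 2 C"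
proof -
  define S where "S = set_pmf J"
  define A where "A = map_pmf fst J"
  define B where "B = map_pmf snd J"
  define Ys where "Ys = snd ` S"
  have finY: "finite Ys" using fin unfolding Ys_def S_def by simp
  have Jpos: "pmf J z > 0" if "z \<in> S" for z using that unfolding S_def by (simp add: pmf_positive_iff)
  have Apos: "pmf A (fst w) > 0" if "w \<in> S" for w
    using that unfolding A_def S_def by (auto simp: pmf_positive_iff)
  have Bpos: "pmf B (snd w) > 0" if "w \<in> S" for w
    using that unfolding B_def S_def by (auto simp: pmf_positive_iff)
  have Qpos: "Q (snd z) > 0" if "z \<in> S" for z
  proof -
    have "0 < C * pmf A (fst z) * Q (snd z)" using dom[of "fst z" "snd z"] Jpos[OF that] unfolding A_def by simp
    then show ?thesis using C Apos[OF that] Qnn[of "snd z"] by (simp add: zero_less_mult_iff)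
  qed
  have step: "pmf J z * log 2 (pmf J z / (pmf A (fst z) * pmf B (snd z)))
      \<le> pmf J z * log 2 C + pmf J z * log 2 (Q (snd z) / pmf B (snd z))" if z: "z \<in> S" for z
  proof -
    have "pmf J z / (pmf A (fst z) * pmf B (snd z)) = (pmf J z / (pmf A (fst z) * Q (snd z))) * (Q (snd z) / pmf B (snd z))"
      using Qpos[OF z] Bpos[OF z] Apos[OF z] by (simp add: field_simps)
    note eq = this
    have "log 2 (pmf J z / (pmf A (fst z) * pmf B (snd z))) = log 2 (pmf J z / (pmf A (fst z) * Q (snd z))) + log 2 (Q (snd z) / pmf B (snd z))"
      unfolding eq using Qpos[OF z] Bpos[OF z] Apos[OF z] Jpos[OF z] by (intro log_mult_pos) auto
    moreover have "log 2 (pmf J z / (pmf A (fst z) * Q (snd z))) \<le> log 2 C"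
    proof -
      have "pmf J z / (pmf A (fst z) * Q (snd z)) \<le> C"
        using dom[of "fst z" "snd z"] Qpos[OF z] Apos[OF z] unfolding A_def by (simp add: divide_le_eq mult_ac)
      then show ?thesis using Qpos[OF z] Apos[OF z] Jpos[OF z] by (intro log_mono) (auto intro!: divide_pos_pos)
    qed
    ultimately show ?thesis using Jpos[OF z] by (simp add: distrib_left mult_left_mono)
  qed
  have sum1: "(\<Sum>z\<in>S. pmf J z) = 1" unfolding S_def using fin by (simp add: sum_pmf_eq_1)
  have Bsum: "pmf B y = (\<Sum>z\<in>{z\<in>S. snd z = y}. pmf J z)" for y
  proof -
    have "pmf B y = measure J (snd -` {y})" unfolding B_def by (simp add: pmf_map)
    also have "\<dots> = measure J ({z\<in>S. snd z = y})"
      unfolding S_def by (subst measure_Int_set_pmf[symmetric]) (simp add: Int_def conj_commute)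
    also have "\<dots> = (\<Sum>z\<in>{z\<in>S. snd z = y}. pmf J z)" using fin unfolding S_def by (simp add: measure_measure_pmf_finite)
    finally show ?thesis .
  qed
  have grp: "(\<Sum>z\<in>S. pmf J z * log 2 (Q (snd z) / pmf B (snd z))) = (\<Sum>y\<in>Ys. pmf B y * log 2 (Q y / pmf B y))"
  proof -
    have "(\<Sum>z\<in>S. pmf J z * log 2 (Q (snd z) / pmf B (snd z))) = (\<Sum>y\<in>Ys. \<Sum>z\<in>{z\<in>S. snd z = y}. pmf J z * log 2 (Q (snd z) / pmf B (snd z)))"
      unfolding Ys_def using fin unfolding S_def by (rule sum.group[symmetric]) (auto simp: fin)
    also have "\<dots> = (\<Sum>y\<in>Ys. pmf B y * log 2 (Q y / pmf B y))"
      by (intro sum.cong refl) (simp add: Bsum sum_distrib_right)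
    finally show ?thesis .
  qed
  have lnb: "pmf B y * log 2 (Q y / pmf B y) \<le> (Q y - pmf B y) / ln 2" if y: "y \<in> Ys" for y
  proof -
    obtain z where z: "z \<in> S" "y = snd z" using y unfolding Ys_def by auto
    have qp: "Q y > 0" "pmf B y > 0" using Qpos[OF z(1)] Bpos[OF z(1)] z(2) by auto
    have "ln (Q y / pmf B y) \<le> Q y / pmf B y - 1" using qp by (intro ln_le_minus_one) simp
    then have "pmf B y * ln (Q y / pmf B y) \<le> pmf B y * (Q y / pmf B y - 1)" using qp by (intro mult_left_mono) auto
    also have "\<dots> = Q y - pmf B y" using qp by (simp add: field_simps)
    finally show ?thesis unfolding log_def using qp by (simp add: field_simps)
  qed
  have Bsum1: "(\<Sum>y\<in>Ys. pmf B y) = 1"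
    unfolding B_def Ys_def S_def using fin by (intro sum_pmf_eq_1) auto
  have "(\<Sum>y\<in>Ys. pmf B y * log 2 (Q y / pmf B y)) \<le> (\<Sum>y\<in>Ys. (Q y - pmf B y) / ln 2)"
    using lnb by (rule sum_mono)
  also have "\<dots> = ((\<Sum>y\<in>Ys. Q y) - 1) / ln 2" by (simp add: sum_divide_distrib[symmetric] sum_subtractf Bsum1)
  also have "\<dots> \<le> 0" using Qsum unfolding Ys_def S_def by (simp add: divide_le_0_iff)
  finally have neg: "(\<Sum>y\<in>Ys. pmf B y * log 2 (Q y / pmf B y)) \<le> 0" .
  have "(\<Sum>z\<in>S. pmf J z * log 2 (pmf J z / (pmf A (fst z) * pmf B (snd z))))
      \<le> (\<Sum>z\<in>S. pmf J z * log 2 C + pmf J z * log 2 (Q (snd z) / pmf B (snd z)))"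
    using step by (rule sum_mono)
  also have "\<dots> = log 2 C + (\<Sum>y\<in>Ys. pmf B y * log 2 (Q y / pmf B y))"
    by (simp add: sum.distrib grp sum_distrib_right[symmetric] sum1)
  also have "\<dots> \<le> log 2 C" using neg by simp
  finally show ?thesis unfolding S_def A_def B_def .
qed

lemma fiber_bij:
  fixes k k' :: "'a \<Rightarrow> 'k"
  assumes fin: "finite A" and cards: "\<And>c. card {a\<in>A. k a = c} = card {a\<in>A. k' a = c}"
  shows "\<exists>\<pi>. bij_betw \<pi> A A \<and> (\<forall>a\<in>A. k (\<pi> a) = k' a) \<and> (\<forall>a. a \<notin> A \<longrightarrow> \<pi> a = a)"
proof -
  have "\<forall>c. \<exists>\<sigma>. bij_betw \<sigma> {a\<in>A. k' a = c} {a\<in>A. k a = c}"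
  proof
    fix c
    show "\<exists>\<sigma>. bij_betw \<sigma> {a\<in>A. k' a = c} {a\<in>A. k a = c}"
      using fin cards[of c] by (intro finite_same_card_bij) auto
  qed
  then obtain \<sigma> where \<sigma>: "\<And>c. bij_betw (\<sigma> c) {a\<in>A. k' a = c} {a\<in>A. k a = c}" by metis
  define \<pi> where "\<pi> a = (if a \<in> A then \<sigma> (k' a) a else a)" for a
  have img: "\<pi> a \<in> A \<and> k (\<pi> a) = k' a" if "a \<in> A" for a
  proof -
    have "\<sigma> (k' a) a \<in> {b\<in>A. k b = k' a}"
      using \<sigma>[of "k' a"] that by (auto simp: bij_betw_def)
    then show ?thesis using that by (simp add: \<pi>_def)
  qed
  have inj: "inj_on \<pi> A"
  proof (rule inj_onI)
    fix a b assume ab: "a \<in> A" "b \<in> A" "\<pi> a = \<pi> b"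
    then have "k' a = k' b" using img[of a] img[of b] by metis
    then have "\<sigma> (k' a) a = \<sigma> (k' a) b" using ab by (simp add: \<pi>_def)
    moreover have "inj_on (\<sigma> (k' a)) {c\<in>A. k' c = k' a}" using \<sigma> by (auto simp: bij_betw_def)
    ultimately show "a = b" using ab \<open>k' a = k' b\<close> by (auto dest: inj_onD)
  qed
  have surj: "\<pi> ` A = A"
  proof
    show "\<pi> ` A \<subseteq> A" using img by auto
    show "A \<subseteq> \<pi> ` A"
    proof
      fix c assume c: "c \<in> A"
      have "c \<in> \<sigma> (k c) ` {a\<in>A. k' a = k c}" using \<sigma>[of "k c"] c by (auto simp: bij_betw_def)
      then obtain a where a: "a \<in> A" "k' a = k c" "c = \<sigma> (k c) a" by auto
      then have "\<pi> a = c" by (simp add: \<pi>_def)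
      then show "c \<in> \<pi> ` A" using a by auto
    qed
  qed
  show ?thesis
    using inj surj img by (intro exI[of _ \<pi>]) (auto simp: bij_betw_def \<pi>_def)
qed

definition RD :: "nat \<Rightarrow> nat \<Rightarrow> nat \<Rightarrow> real \<Rightarrow> (frag \<Rightarrow> bool) \<Rightarrow> (nat \<times> bool) multiset pmf" where
  "RD M N alpha0 eta v = map_pmf (\<lambda>F. image_mset (\<lambda>f. (snd (snd (snd f)), v f \<noteq> F f)) (mset_set (frags M N alpha0)))
      (Pi_pmf (frags M N alpha0) False (\<lambda>_. bernoulli_pmf eta))"

definition cnt :: "nat \<Rightarrow> nat \<Rightarrow> nat \<Rightarrow> (frag \<Rightarrow> bool) \<Rightarrow> nat \<Rightarrow> nat" where
  "cnt M N alpha0 v n = card {f \<in> frags M N alpha0. snd (snd (snd f)) = n \<and> v f}"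

lemma finite_frags: "finite (frags M N alpha0)"
proof -
  have "frags M N alpha0 \<subseteq> UNIV \<times> {..<M} \<times> {..<2^M * alpha0} \<times> {..<N}"
  proof
    fix f assume "f \<in> frags M N alpha0"
    then obtain k i j n where f: "f = (k, i, j, n)" "i < M" "j < 2^i * alpha0" "n < N"
      unfolding frags_def by auto
    have "2^i * alpha0 \<le> 2^M * alpha0" using f(2) by (intro mult_right_mono) auto
    then have "j < 2^M * alpha0" using f(3) by linarith
    then show "f \<in> UNIV \<times> {..<M} \<times> {..<2^M * alpha0} \<times> {..<N}" using f by auto
  qed
  moreover have "finite (UNIV \<times> {..<M} \<times> {..<2^M * alpha0} \<times> {..<N} :: frag set)" by simp
  ultimately show ?thesis using finite_subset by blast
qed

lemma RD_perm:
  assumes "\<And>n. cnt M N alpha0 v n = cnt M N alpha0 v' n"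
  shows "RD M N alpha0 eta v = RD M N alpha0 eta v'"
proof -
  define Fr where "Fr = frags M N alpha0"
  have fin: "finite Fr" unfolding Fr_def by (rule finite_frags)
  define pos :: "frag \<Rightarrow> nat" where "pos f = snd (snd (snd f))" for f
  have cards: "card {f\<in>Fr. (pos f, v f) = c} = card {f\<in>Fr. (pos f, v' f) = c}" for c
  proof (cases c)
    case (Pair n b)
    show ?thesis
    proof (cases b)
      case True
      then show ?thesis using assms[of n] unfolding Pair cnt_def Fr_def pos_def by simp
    next
      case False
      have split: "card {f\<in>Fr. pos f = n} = card {f\<in>Fr. pos f = n \<and> w f} + card {f\<in>Fr. pos f = n \<and> \<not> w f}" for w
      proof -
        have "{f\<in>Fr. pos f = n} = {f\<in>Fr. pos f = n \<and> w f} \<union> {f\<in>Fr. pos f = n \<and> \<not> w f}" by auto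
        moreover have "card ({f\<in>Fr. pos f = n \<and> w f} \<union> {f\<in>Fr. pos f = n \<and> \<not> w f}) = card {f\<in>Fr. pos f = n \<and> w f} + card {f\<in>Fr. pos f = n \<and> \<not> w f}"
          using fin by (intro card_Un_disjoint) auto
        ultimately show ?thesis by simp
      qed
      have "card {f\<in>Fr. pos f = n \<and> v f} = card {f\<in>Fr. pos f = n \<and> v' f}"
        using assms[of n] unfolding cnt_def Fr_def pos_def by simp
      then have "card {f\<in>Fr. pos f = n \<and> \<not> v f} = card {f\<in>Fr. pos f = n \<and> \<not> v' f}"
        using split[of v] split[of v'] by simp
      then show ?thesis using Pair False by simp
    qed
  qed
  obtain \<pi> where \<pi>: "bij_betw \<pi> Fr Fr" "\<And>a. a \<in> Fr \<Longrightarrow> (pos (\<pi> a), v (\<pi> a)) = (pos a, v' a)"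
    "\<And>a. a \<notin> Fr \<Longrightarrow> \<pi> a = a"
    using fiber_bij[OF fin cards] by blast
  define PF where "PF = Pi_pmf Fr False (\<lambda>_. bernoulli_pmf eta)"
  have PFeq: "PF = map_pmf (\<lambda>g. g \<circ> \<pi>) PF"
    unfolding PF_def using fin \<pi>(1,3) by (intro Pi_pmf_bij_betw) auto
  have msetpi: "image_mset \<pi> (mset_set Fr) = mset_set Fr"
    using \<pi>(1) by (simp add: image_mset_mset_set bij_betw_def)
  have hv: "image_mset (\<lambda>f. (pos f, v f \<noteq> F f)) (mset_set Fr) = image_mset (\<lambda>f. (pos f, v' f \<noteq> (F \<circ> \<pi>) f)) (mset_set Fr)" for F
  proof -
    have "image_mset (\<lambda>f. (pos f, v f \<noteq> F f)) (mset_set Fr) = image_mset (\<lambda>f. (pos f, v f \<noteq> F f)) (image_mset \<pi> (mset_set Fr))"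
      by (simp add: msetpi)
    also have "\<dots> = image_mset (\<lambda>f. (pos (\<pi> f), v (\<pi> f) \<noteq> F (\<pi> f))) (mset_set Fr)"
      by (simp add: multiset.map_comp comp_def)
    also have "\<dots> = image_mset (\<lambda>f. (pos f, v' f \<noteq> (F \<circ> \<pi>) f)) (mset_set Fr)"
      using \<pi>(2) fin by (intro image_mset_cong) (auto simp: Pair_inject)
    finally show ?thesis .
  qed
  have "RD M N alpha0 eta v = map_pmf (\<lambda>F. image_mset (\<lambda>f. (pos f, v f \<noteq> F f)) (mset_set Fr)) PF"
    unfolding RD_def PF_def Fr_def pos_def ..
  also have "\<dots> = map_pmf (\<lambda>F. image_mset (\<lambda>f. (pos f, v' f \<noteq> (F \<circ> \<pi>) f)) (mset_set Fr)) PF"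
    by (rule map_pmf_cong[OF refl], rule hv)
  also have "\<dots> = map_pmf (\<lambda>F. image_mset (\<lambda>f. (pos f, v' f \<noteq> F f)) (mset_set Fr)) (map_pmf (\<lambda>g. g \<circ> \<pi>) PF)"
    by (simp add: pmf.map_comp comp_def)
  also have "\<dots> = RD M N alpha0 eta v'"
    by (simp only: PFeq[symmetric]) (simp add: RD_def PF_def Fr_def pos_def)
  finally show ?thesis .
qed

lemma frags_Sigma: "frags M N alpha0 = (SIGMA k:UNIV. SIGMA i:{..<M}. SIGMA j:{..<2^i*alpha0}. {..<N})"
  by (auto simp: frags_def)

lemma sum_frags: "(\<Sum>f\<in>frags M N alpha0. g f) = (\<Sum>k\<in>UNIV. \<Sum>i<M. \<Sum>j<2^i*alpha0. \<Sum>n<N. g (k, i, j, n))"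
  unfolding frags_Sigma by (simp add: sum.Sigma)

lemma cnt_formula:
  assumes "n < N"
  shows "cnt M N alpha0 (frag_value x y) n = alpha0 * (\<Sum>i<M. 2^i * (of_bool (x (i, n)) + of_bool (y (i, n))))"
proof -
  have "cnt M N alpha0 (frag_value x y) n = (\<Sum>f\<in>frags M N alpha0. if snd (snd (snd f)) = n \<and> frag_value x y f then 1 else 0)"
  proof -
    have e: "{f \<in> frags M N alpha0. snd (snd (snd f)) = n \<and> frag_value x y f} = frags M N alpha0 \<inter> {f. snd (snd (snd f)) = n \<and> frag_value x y f}" by blast
    show ?thesis unfolding cnt_def e using finite_frags by (simp only: sum.If_cases) simp
  qed
  also have "\<dots> = (\<Sum>k\<in>UNIV. \<Sum>i<M. \<Sum>j<2^i*alpha0. \<Sum>n'<N. if n' = n \<and> (if k then y (i, n') else x (i, n')) then 1 else 0)"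
    by (simp add: sum_frags frag_value_def)
  also have "\<dots> = (\<Sum>k\<in>UNIV. \<Sum>i<M. \<Sum>j<2^i*alpha0. if (if k then y (i, n) else x (i, n)) then 1 else 0)"
  proof -
    have d: "(\<Sum>n'<N. if n' = n \<and> P n' then (1::nat) else 0) = (if P n then 1 else 0)" for P
    proof -
      have "(\<Sum>n'<N. if n' = n \<and> P n' then (1::nat) else 0) = (\<Sum>n'<N. if n' = n then (if P n then 1 else 0) else 0)"
        by (intro sum.cong) auto
      then show ?thesis using assms by simp
    qed
    show ?thesis by (simp only: d)
  qed
  also have "\<dots> = (\<Sum>k\<in>UNIV. \<Sum>i<M. 2^i*alpha0 * of_bool (if k then y (i, n) else x (i, n)))"
    by (simp only: sum_constant card_lessThan of_nat_id of_bool_def)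
  also have "\<dots> = (\<Sum>i<M. 2^i*alpha0 * of_bool (y (i, n))) + (\<Sum>i<M. 2^i*alpha0 * of_bool (x (i, n)))"
    by (simp only: UNIV_bool sum.insert finite.emptyI finite.insertI sum.empty) simp
  also have "\<dots> = alpha0 * (\<Sum>i<M. 2^i * (of_bool (x (i, n)) + of_bool (y (i, n))))"
    by (simp only: sum.distrib[symmetric] sum_distrib_left) (intro sum.cong refl, simp only: algebra_simps)
  finally show ?thesis .
qed

lemma bin_bound: "(\<Sum>i<M. 2^i * of_bool (a i) :: nat) < 2^M"
proof (induction M)
  case 0 then show ?case by simp
next
  case (Suc M)
  have "(\<Sum>i<Suc M. 2^i * of_bool (a i) :: nat) \<le> (\<Sum>i<M. 2^i * of_bool (a i)) + 2^M" by simp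
  then show ?case using Suc by simp
qed

lemma bin_inj:
  assumes "(\<Sum>i<M. 2^i * of_bool (a i) :: nat) = (\<Sum>i<M. 2^i * of_bool (b i))"
  shows "\<forall>i<M. a i = b i"
  using assms
proof (induction M)
  case 0 then show ?case by simp
next
  case (Suc M)
  have la: "(\<Sum>i<M. 2^i * of_bool (a i) :: nat) < 2^M" and lb: "(\<Sum>i<M. 2^i * of_bool (b i) :: nat) < 2^M"
    by (rule bin_bound)+
  have eq: "(\<Sum>i<M. 2^i * of_bool (a i) :: nat) + 2^M * of_bool (a M) = (\<Sum>i<M. 2^i * of_bool (b i)) + 2^M * of_bool (b M)"
    using Suc.prems by simp
  have abM: "a M = b M"
  proof (rule ccontr)
    assume "a M \<noteq> b M"
    then show False using eq la lb by (cases "a M") auto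
  qed
  then have "(\<Sum>i<M. 2^i * of_bool (a i) :: nat) = (\<Sum>i<M. 2^i * of_bool (b i))" using eq by simp
  then have "\<forall>i<M. a i = b i" by (rule Suc.IH)
  then show ?case using abM less_Suc_eq by auto
qed

definition keyv :: "nat \<Rightarrow> nat \<Rightarrow> (nat \<times> nat \<Rightarrow> bool) \<Rightarrow> (nat \<times> nat \<Rightarrow> bool) \<Rightarrow> nat \<Rightarrow> nat" where
  "keyv M N x y = restrict (\<lambda>n. \<Sum>i<M. 2^i * (of_bool (x (i, n)) + of_bool (y (i, n)))) {..<N}"

lemma cnt_zero: "n \<ge> N \<Longrightarrow> cnt M N alpha0 v n = 0"
  unfolding cnt_def frags_def by (auto intro!: card_eq_0_iff[THEN iffD2])

lemma cnt_keyv: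
  assumes "keyv M N x y = keyv M N x' y'"
  shows "cnt M N alpha0 (frag_value x y) n = cnt M N alpha0 (frag_value x' y') n"
proof (cases "n < N")
  case True
  have "keyv M N x y n = keyv M N x' y' n" using assms by simp
  then show ?thesis using True by (simp add: cnt_formula keyv_def)
next
  case False then show ?thesis by (simp add: cnt_zero)
qed

lemma sum_split_bits: "(\<Sum>i<M. 2^i * (of_bool (a i) + of_bool (b i)) :: nat) = (\<Sum>i<M. 2^i * of_bool (a i)) + (\<Sum>i<M. 2^i * of_bool (b i))"
  by (simp add: sum.distrib distrib_left)

lemma keyv_inj:
  assumes "keyv M N x y = keyv M N x y'"
    and "\<forall>z. z \<notin> {..<M} \<times> {..<N} \<longrightarrow> y z = False"
    and "\<forall>z. z \<notin> {..<M} \<times> {..<N} \<longrightarrow> y' z = False"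
  shows "y = y'"
proof
  fix z :: "nat \<times> nat"
  obtain i n where z: "z = (i, n)" by (cases z)
  show "y z = y' z"
  proof (cases "i < M \<and> n < N")
    case True
    have "keyv M N x y n = keyv M N x y' n" using assms(1) by simp
    then have "(\<Sum>i<M. 2^i * of_bool (y (i, n)) :: nat) = (\<Sum>i<M. 2^i * of_bool (y' (i, n)))"
      using True by (simp add: keyv_def sum_split_bits)
    then have "\<forall>i<M. y (i, n) = y' (i, n)" by (rule bin_inj)
    then show ?thesis using True z by simp
  next
    case False then show ?thesis using assms(2,3) z by auto
  qed
qed

lemma keyv_in: "keyv M N x y \<in> PiE {..<N} (\<lambda>_. {..<2^(M+1)})"
proof -
  have "(\<Sum>i<M. 2^i * (of_bool (x (i, n)) + of_bool (y (i, n))) :: nat) < 2^(M+1)" for n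
    using bin_bound[where M=M and a="\<lambda>i. x (i, n)"] bin_bound[where M=M and a="\<lambda>i. y (i, n)"] by (simp add: sum_split_bits)
  then show ?thesis unfolding keyv_def by auto
qed

lemma card_Cset: "card (PiE {..<N} (\<lambda>_. {..<2^(M+1)} :: nat set)) = (2^(M+1))^N"
  by (simp add: card_PiE)

lemma K_eq: "bind_pmf PY (\<lambda>Y. bind_pmf (Pi_pmf (frags M N alpha0) False (\<lambda>_. bernoulli_pmf eta)) (\<lambda>F. return_pmf (reads M N alpha0 x Y F)))
   = bind_pmf PY (\<lambda>Y. RD M N alpha0 eta (frag_value x Y))"
  unfolding RD_def reads_def map_pmf_def ..

lemma pmf_K_bound:
  fixes M N alpha0 :: nat and eta :: real
  defines "D \<equiv> {..<M} \<times> {..<N}"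
  defines "PY \<equiv> Pi_pmf D False (\<lambda>_. bernoulli_pmf (1/2))"
  defines "Cset \<equiv> PiE {..<N} (\<lambda>_. {..<2^(M+1)} :: nat set)"
  defines "rep \<equiv> (\<lambda>c. SOME xy. keyv M N (fst xy) (snd xy) = c)"
  defines "Qp \<equiv> (\<lambda>r. (1/2)^((M+1)*N) * (\<Sum>c\<in>Cset. pmf (RD M N alpha0 eta (frag_value (fst (rep c)) (snd (rep c)))) r))"
  shows "pmf (bind_pmf PY (\<lambda>Y. RD M N alpha0 eta (frag_value x Y))) r \<le> 2^N * Qp r"
proof -
  define OY where "OY = {f. \<forall>z. z \<notin> D \<longrightarrow> f z = False}"
  have finD: "finite D" unfolding D_def by simp
  have OY_eq: "OY = PiE_dflt D False (\<lambda>_. UNIV)" unfolding OY_def PiE_dflt_def by auto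
  have finOY: "finite OY" unfolding OY_eq using finD by (intro finite_PiE_dflt) auto
  have setPY: "set_pmf PY \<subseteq> OY" unfolding PY_def OY_def using finD by (rule set_Pi_pmf_subset)
  have cardD: "card D = M * N" unfolding D_def by (simp add: card_cartesian_product)
  have pmfPY: "pmf PY y = (1/2)^(M*N)" if "y \<in> OY" for y
    using that finD unfolding PY_def OY_def by (simp add: pmf_Pi cardD)
  define g where "g = (\<lambda>c. pmf (RD M N alpha0 eta (frag_value (fst (rep c)) (snd (rep c)))) r)"
  have repk: "keyv M N (fst (rep c)) (snd (rep c)) = c" if "c = keyv M N x' y'" for c x' y'
    unfolding rep_def by (rule someI[where x="(x', y')"]) (simp add: that)
  have RDeq: "RD M N alpha0 eta (frag_value x y) = RD M N alpha0 eta (frag_value (fst (rep (keyv M N x y))) (snd (rep (keyv M N x y))))" for y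
    by (rule RD_perm, rule cnt_keyv, rule repk[symmetric]) simp
  have "pmf (bind_pmf PY (\<lambda>Y. RD M N alpha0 eta (frag_value x Y))) r
      = (\<integral>Y. pmf (RD M N alpha0 eta (frag_value x Y)) r \<partial>measure_pmf PY)"
    by (rule pmf_bind)
  also have "\<dots> = (\<Sum>y\<in>OY. pmf PY y *\<^sub>R pmf (RD M N alpha0 eta (frag_value x y)) r)"
    using finOY setPY by (intro integral_measure_pmf) auto
  also have "\<dots> = (1/2)^(M*N) * (\<Sum>y\<in>OY. g (keyv M N x y))"
    by (simp add: pmfPY sum_distrib_left g_def RDeq[symmetric])
  also have "(\<Sum>y\<in>OY. g (keyv M N x y)) = (\<Sum>c\<in>keyv M N x ` OY. g c)"
  proof -
    have "inj_on (keyv M N x) OY"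
      by (rule inj_onI, rule keyv_inj) (auto simp: OY_def D_def)
    then show ?thesis by (simp add: sum.reindex)
  qed
  also have "(\<Sum>c\<in>keyv M N x ` OY. g c) \<le> (\<Sum>c\<in>Cset. g c)"
  proof (rule sum_mono2)
    show "finite Cset" unfolding Cset_def by (intro finite_PiE) auto
    show "keyv M N x ` OY \<subseteq> Cset" unfolding Cset_def using keyv_in by blast
  qed (simp add: g_def)
  finally have "pmf (bind_pmf PY (\<lambda>Y. RD M N alpha0 eta (frag_value x Y))) r \<le> (1/2)^(M*N) * (\<Sum>c\<in>Cset. g c)"
    by (simp add: mult_left_mono)
  also have "\<dots> = 2^N * Qp r"
  proof -
    have "(1/2::real)^(M*N) = 2^N * (1/2)^((M+1)*N)"
      by (simp add: power_add power_mult_distrib algebra_simps power_one_over flip: power_mult)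
    then show ?thesis unfolding Qp_def g_def by simp
  qed
  finally show ?thesis .
qed

theorem theorem2:
  fixes M N alpha0 :: nat and eta beta :: real and p :: "nat \<times> nat \<Rightarrow> real"
  assumes "alpha0 \<ge> 1"
    and "0 < eta" and "eta < 1/2"
    and "\<And>mn. 0 \<le> p mn \<and> p mn \<le> 1"
    and "0 < beta" and "beta < 1"
    and "real M \<ge> 1 / beta"
  shows "info_X_R M N alpha0 eta p / (real M * real N) \<le> beta"
proof -
  define D where "D = {..<M} \<times> {..<N}"
  define Fr where "Fr = frags M N alpha0"
  define PX where "PX = Pi_pmf D False (\<lambda>mn. bernoulli_pmf (p mn))"
  define PY where "PY = Pi_pmf D False (\<lambda>_. bernoulli_pmf (1/2))"
  define PF where "PF = Pi_pmf Fr False (\<lambda>_. bernoulli_pmf eta)"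
  define K where "K = (\<lambda>x. bind_pmf PY (\<lambda>Y. bind_pmf PF (\<lambda>F. return_pmf (reads M N alpha0 x Y F))))"
  define J where "J = pooled_joint M N alpha0 eta p"
  define Cset where "Cset = PiE {..<N} (\<lambda>_. {..<2^(M+1)} :: nat set)"
  define rep where "rep = (\<lambda>c. SOME xy. keyv M N (fst xy) (snd xy) = c)"
  define Qp where "Qp = (\<lambda>r. (1/2::real)^((M+1)*N) * (\<Sum>c\<in>Cset. pmf (RD M N alpha0 eta (frag_value (fst (rep c)) (snd (rep c)))) r))"
  have finD: "finite D" unfolding D_def by simp
  have finFr: "finite Fr" unfolding Fr_def by (rule finite_frags)
  have Omega_fin: "finite {f :: 'a \<Rightarrow> bool. \<forall>z. z \<notin> A \<longrightarrow> f z = False}" if "finite A" for A :: "'a set"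
  proof -
    have "{f :: 'a \<Rightarrow> bool. \<forall>z. z \<notin> A \<longrightarrow> f z = False} = PiE_dflt A False (\<lambda>_. UNIV)"
      unfolding PiE_dflt_def by auto
    then show ?thesis using that by (simp add: finite_PiE_dflt)
  qed
  have J_eq: "J = bind_pmf PX (\<lambda>X. map_pmf (Pair X) (K X))"
    unfolding J_def pooled_joint_def K_def PX_def PY_def PF_def Fr_def D_def
    by (simp add: map_pmf_def bind_assoc_pmf bind_return_pmf)
  have fstJ: "map_pmf fst J = PX"
    unfolding J_eq by (simp add: map_bind_pmf pmf.map_comp comp_def bind_return_pmf')
  have pmfJ: "pmf J (x, r) = pmf PX x * pmf (K x) r" for x r
  proof -
    have inner: "pmf (map_pmf (Pair X) (K X)) (x, r) = (if X = x then pmf (K x) r else 0)" for X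
    proof (cases "X = x")
      case True
      then show ?thesis by (simp add: pmf_map_inj' inj_on_def)
    next
      case False
      then show ?thesis by (auto simp: pmf_eq_0_set_pmf)
    qed
    have "pmf J (x, r) = (\<integral>X. (if X = x then pmf (K x) r else 0) \<partial>measure_pmf PX)"
      unfolding J_eq pmf_bind inner ..
    also have "\<dots> = (\<Sum>a\<in>{x}. pmf PX a *\<^sub>R (if a = x then pmf (K x) r else 0))"
      by (rule integral_measure_pmf) (auto split: if_splits)
    finally show ?thesis by simp
  qed
  have finJ: "finite (set_pmf J)"
  proof -
    define OD where "OD = {f :: nat \<times> nat \<Rightarrow> bool. \<forall>z. z \<notin> D \<longrightarrow> f z = False}"
    define OF where "OF = {f :: frag \<Rightarrow> bool. \<forall>z. z \<notin> Fr \<longrightarrow> f z = False}"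
    have "set_pmf J \<subseteq> (\<lambda>(X, Y, F). (X, reads M N alpha0 X Y F)) ` (OD \<times> OD \<times> OF)"
    proof
      fix z assume "z \<in> set_pmf J"
      then obtain X Y F where XYF: "X \<in> set_pmf PX" "Y \<in> set_pmf PY" "F \<in> set_pmf PF" "z = (X, reads M N alpha0 X Y F)"
        unfolding J_def pooled_joint_def PX_def PY_def PF_def D_def Fr_def by (auto simp: set_bind_pmf)
      have "X \<in> OD" using XYF(1) unfolding PX_def OD_def by (auto dest: subsetD[OF set_Pi_pmf_subset[OF finD]])
      moreover have "Y \<in> OD" using XYF(2) unfolding PY_def OD_def by (auto dest: subsetD[OF set_Pi_pmf_subset[OF finD]])
      moreover have "F \<in> OF" using XYF(3) unfolding PF_def OF_def by (auto dest: subsetD[OF set_Pi_pmf_subset[OF finFr]])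
      ultimately show "z \<in> (\<lambda>(X, Y, F). (X, reads M N alpha0 X Y F)) ` (OD \<times> OD \<times> OF)"
        using XYF(4) by force
    qed
    moreover have "finite OD" unfolding OD_def by (rule Omega_fin[OF finD])
    moreover have "finite OF" unfolding OF_def by (rule Omega_fin[OF finFr])
    ultimately show ?thesis by (meson finite_SigmaI finite_imageI finite_subset)
  qed
  have Kb: "pmf (K x) r \<le> 2^N * Qp r" for x r
  proof -
    have "K x = bind_pmf PY (\<lambda>Y. RD M N alpha0 eta (frag_value x Y))"
      unfolding K_def PF_def Fr_def by (rule K_eq)
    then show ?thesis
      unfolding Qp_def Cset_def rep_def PY_def D_def by (simp only: pmf_K_bound)
  qed
  have Qnn: "0 \<le> Qp r" for r unfolding Qp_def by (intro mult_nonneg_nonneg sum_nonneg) auto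
  have dom: "pmf J (x, r) \<le> 2^N * pmf (map_pmf fst J) x * Qp r" for x r
  proof -
    have "pmf PX x * pmf (K x) r \<le> pmf PX x * (2^N * Qp r)" by (rule mult_left_mono[OF Kb]) simp
    then show ?thesis unfolding fstJ pmfJ by (simp add: mult_ac)
  qed
  have Qsum: "(\<Sum>r\<in>snd ` set_pmf J. Qp r) \<le> 1"
  proof -
    define Rs where "Rs = snd ` set_pmf J"
    have finRs: "finite Rs" unfolding Rs_def using finJ by simp
    have finC: "finite Cset" unfolding Cset_def by (intro finite_PiE) auto
    have "(\<Sum>r\<in>Rs. Qp r) = (1/2::real)^((M+1)*N) * (\<Sum>c\<in>Cset. \<Sum>r\<in>Rs. pmf (RD M N alpha0 eta (frag_value (fst (rep c)) (snd (rep c)))) r)"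
      unfolding Qp_def by (simp add: sum_distrib_left[symmetric] sum.swap[of _ Rs])
    also have "\<dots> \<le> (1/2::real)^((M+1)*N) * (\<Sum>c\<in>Cset. 1)"
    proof (intro mult_left_mono sum_mono)
      fix c
      show "(\<Sum>r\<in>Rs. pmf (RD M N alpha0 eta (frag_value (fst (rep c)) (snd (rep c)))) r) \<le> 1"
        using finRs by (simp add: measure_measure_pmf_finite[symmetric])
    qed simp
    also have "\<dots> = 1"
      unfolding Cset_def by (simp add: card_PiE power_mult_distrib power_one_over power_add flip: power_mult)
    finally show ?thesis unfolding Rs_def .
  qed
  have info_eq: "info_X_R M N alpha0 eta p = (\<Sum>z\<in>set_pmf J. pmf J z * log 2 (pmf J z / (pmf (map_pmf fst J) (fst z) * pmf (map_pmf snd J) (snd z))))"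
    unfolding info_X_R_def J_def using finJ unfolding J_def by (rule MI_pmf_finite) simp
  have "info_X_R M N alpha0 eta p \<le> log 2 (2^N)"
    unfolding info_eq using finJ Qnn Qsum dom by (intro MI_sum_bound) auto
  then have info_le: "info_X_R M N alpha0 eta p \<le> real N" by simp
  show ?thesis
  proof (cases "N = 0")
    case True then show ?thesis using assms(5) by simp
  next
    case False
    have Mpos: "real M > 0" using assms(5,7) by (smt (verit) divide_pos_pos)
    have "info_X_R M N alpha0 eta p / (real M * real N) \<le> real N / (real M * real N)"
      using info_le Mpos False by (intro divide_right_mono) auto
    also have "\<dots> = 1 / real M" using False by simp
    also have "\<dots> \<le> beta" using assms(5,7) Mpos by (simp add: divide_le_eq mult.commute pos_divide_le_eq)
    finally show ?thesis .
  qed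
qed

end
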